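(* Let $N$ be a binary orchard network and let $N'$ be the directed graph obtained from $N$ by an rSPR move. If $N'$ admits an HGT-consistent labelling (in the sense for directed graphs given below), then $N'$ is a network; that is, the rSPR move is valid.
   Context: A (directed phylogenetic) network on a finite taxa set $X$ is a directed acyclic graph without parallel arcs whose nodes are of the following types: a unique root (indegree 0, outdegree 1); tree nodes (indegree 1, outdegree at least 2); reticulations (indegree at least 2, outdegree 1); leaves (indegree 1, outdegree 0), the leaves being bijectively labelled by $X$. A network is binary if every tree node and every reticulation has total degree exactly 3. A tree is a network without reticulations. Orchard networks: An ordered pair of leaves $(x,y)$ is a cherry if $x$ and $y$ have a common parent; it is a reticulated cherry if the parent $p_x$ of $x$ is a reticulation and $p_x$ and $y$ have a common parent. Let $p_x,p_y$ be the parents of $x,y$. Reducing $(x,y)$ in a network $N$: if $(x,y)$ is a cherry, delete $x$ and suppress $p_x$ if it now has indegree 1 and outdegree 1; if $(x,y)$ is a reticulated cherry, delete the arc $(p_y,p_x)$ and suppress any resulting node of indegree 1 and outdegree 1; otherwise do nothing. (Suppressing a node $v$ with one parent $u$ and one child $w$ means deleting $v$ and adding the arc $(u,w)$.) $N$ is orchard if some sequence of such reductions turns $N$ into a tree with exactly one leaf. rSPR move: Let $N$ be a binary network with an arc $(z,w)$ and an arc $e$ with endpoints $x$ and $y$ (either $e=(x,y)$ or $e=(y,x)$), and let $p$ and $c$ be, respectively, the parent and the child of $x$ other than $y$. The rSPR move $(p,x,c)\xrightarrow{e}(z,w)$ replaces the arcs $(p,x)$, $(x,c)$, $(z,w)$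 by the arcs $(p,c)$, $(z,x)$, $(x,w)$. The move is valid if the resulting directed graph is a network. HGT-consistent labelling of a directed graph: Let $D=(V,A)$ be a directed graph, possibly with parallel arcs, in which every node has indegree and outdegree at most 2 and total degree at most 3. An HGT-consistent labelling of $D$ is a map $t:V\to\mathbb{R}$ such that (1) for every arc $(u,v)$, $t(u)\le t(v)$, and equality is allowed only if $v$ has indegree 2; (2) every node $u$ with at least one child has a child $v$ with $t(u)<t(v)$; (3) for every node $r$ with two parents $u$ and $v$, exactly one of $t(u)=t(r)$ and $t(v)=t(r)$ holds. *)

theory Defs
  imports Complex_Main "HOL-Library.Multiset"
begin

definition s_indeg :: "('v \<times> 'v) set \<Rightarrow> 'v \<Rightarrow> nat" where
  "s_indeg A v = card {u. (u, v) \<in> A}"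

definition s_outdeg :: "('v \<times> 'v) set \<Rightarrow> 'v \<Rightarrow> nat" where
  "s_outdeg A v = card {w. (v, w) \<in> A}"

definition is_root_node :: "('v \<times> 'v) set \<Rightarrow> 'v \<Rightarrow> bool" where
  "is_root_node A v \<longleftrightarrow> s_indeg A v = 0 \<and> s_outdeg A v = 1"

definition is_tree_node :: "('v \<times> 'v) set \<Rightarrow> 'v \<Rightarrow> bool" where
  "is_tree_node A v \<longleftrightarrow> s_indeg A v = 1 \<and> s_outdeg A v \<ge> 2"

definition is_reticulation :: "('v \<times> 'v) set \<Rightarrow> 'v \<Rightarrow> bool" where
  "is_reticulation A v \<longleftrightarrow> s_indeg A v \<ge> 2 \<and> s_outdeg A v = 1"

definition is_leaf :: "('v \<times> 'v) set \<Rightarrow> 'v \<Rightarrow> bool" where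
  "is_leaf A v \<longleftrightarrow> s_indeg A v = 1 \<and> s_outdeg A v = 0"

text \<open>The leaves are
  identified with their labels, i.e. the leaf set is exactly X (bijective labelling).
  Arcs form a set, so there are no parallel arcs.\<close>
definition network :: "'v set \<Rightarrow> 'v set \<Rightarrow> ('v \<times> 'v) set \<Rightarrow> bool" where
  "network X V A \<longleftrightarrow>
     finite V \<and> A \<subseteq> V \<times> V \<and> acyclic A \<and>
     (\<forall>v\<in>V. is_root_node A v \<or> is_tree_node A v \<or> is_reticulation A v \<or> is_leaf A v) \<and>
     (\<exists>!r. r \<in> V \<and> is_root_node A r) \<and>
     {v\<in>V. is_leaf A v} = X"

definition binary_network :: "'v set \<Rightarrow> 'v set \<Rightarrow> ('v \<times> 'v) set \<Rightarrow> bool" where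
  "binary_network X V A \<longleftrightarrow> network X V A \<and>
     (\<forall>v\<in>V. (is_tree_node A v \<longrightarrow> s_outdeg A v = 2) \<and>
             (is_reticulation A v \<longrightarrow> s_indeg A v = 2))"

definition tree_network :: "'v set \<Rightarrow> 'v set \<Rightarrow> ('v \<times> 'v) set \<Rightarrow> bool" where
  "tree_network X V A \<longleftrightarrow> network X V A \<and> (\<forall>v\<in>V. \<not> is_reticulation A v)"

definition the_parent :: "('v \<times> 'v) set \<Rightarrow> 'v \<Rightarrow> 'v" where
  "the_parent A v = (THE u. (u, v) \<in> A)"

definition the_child :: "('v \<times> 'v) set \<Rightarrow> 'v \<Rightarrow> 'v" where
  "the_child A v = (THE w. (v, w) \<in> A)"

definition suppress :: "'v \<Rightarrow> 'v set \<times> ('v \<times> 'v) set \<Rightarrow> 'v set \<times> ('v \<times> 'v) set" where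
  "suppress v G = (let (V, A) = G in
     if v \<in> V \<and> s_indeg A v = 1 \<and> s_outdeg A v = 1 then
       (let u = the_parent A v; w = the_child A v in
         (V - {v}, (A - {(u, v), (v, w)}) \<union> {(u, w)}))
     else G)"

definition is_cherry :: "('v \<times> 'v) set \<Rightarrow> 'v \<Rightarrow> 'v \<Rightarrow> bool" where
  "is_cherry A x y \<longleftrightarrow> the_parent A x = the_parent A y"

definition is_reticulated_cherry :: "('v \<times> 'v) set \<Rightarrow> 'v \<Rightarrow> 'v \<Rightarrow> bool" where
  "is_reticulated_cherry A x y \<longleftrightarrow>
     is_reticulation A (the_parent A x) \<and> (the_parent A y, the_parent A x) \<in> A"

definition reduce_pair :: "'v \<Rightarrow> 'v \<Rightarrow> 'v set \<times> ('v \<times> 'v) set \<Rightarrow> 'v set \<times> ('v \<times> 'v) set" where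
  "reduce_pair x y G = (let (V, A) = G; px = the_parent A x; py = the_parent A y in
     if is_cherry A x y then suppress px (V - {x}, A - {(px, x)})
     else if is_reticulated_cherry A x y then
       suppress py (suppress px (V, A - {(py, px)}))
     else G)"

definition reduction_step :: "'v set \<times> ('v \<times> 'v) set \<Rightarrow> 'v set \<times> ('v \<times> 'v) set \<Rightarrow> bool" where
  "reduction_step G G' \<longleftrightarrow> (\<exists>x y. x \<noteq> y \<and> x \<in> fst G \<and> y \<in> fst G \<and>
      is_leaf (snd G) x \<and> is_leaf (snd G) y \<and> G' = reduce_pair x y G)"

definition orchard :: "'v set \<Rightarrow> 'v set \<Rightarrow> ('v \<times> 'v) set \<Rightarrow> bool" where
  "orchard X V A \<longleftrightarrow> network X V A \<and>
     (\<exists>V' A' l. reduction_step\<^sup>*\<^sup>* (V, A) (V', A') \<and> tree_network {l} V' A')"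

text \<open>The rSPR move (p,x,c) --e--> (z,w) applied to a network with arc set A,
  yielding the arc multiset of the resulting directed graph (parallel arcs possible).\<close>
definition rspr_arcs :: "('v \<times> 'v) set \<Rightarrow> 'v \<Rightarrow> 'v \<Rightarrow> 'v \<Rightarrow> 'v \<Rightarrow> 'v \<Rightarrow> ('v \<times> 'v) multiset" where
  "rspr_arcs A p x c z w =
     mset_set A - {#(p, x), (x, c), (z, w)#} + {#(p, c), (z, x), (x, w)#}"

definition m_indeg :: "('v \<times> 'v) multiset \<Rightarrow> 'v \<Rightarrow> nat" where
  "m_indeg M v = size (filter_mset (\<lambda>a. snd a = v) M)"

definition m_outdeg :: "('v \<times> 'v) multiset \<Rightarrow> 'v \<Rightarrow> nat" where
  "m_outdeg M v = size (filter_mset (\<lambda>a. fst a = v) M)"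

definition hgt_graph :: "'v set \<Rightarrow> ('v \<times> 'v) multiset \<Rightarrow> bool" where
  "hgt_graph V M \<longleftrightarrow> set_mset M \<subseteq> V \<times> V \<and>
     (\<forall>v\<in>V. m_indeg M v \<le> 2 \<and> m_outdeg M v \<le> 2 \<and> m_indeg M v + m_outdeg M v \<le> 3)"

definition hgt_consistent :: "'v set \<Rightarrow> ('v \<times> 'v) multiset \<Rightarrow> ('v \<Rightarrow> real) \<Rightarrow> bool" where
  "hgt_consistent V M t \<longleftrightarrow>
     (\<forall>u v. (u, v) \<in># M \<longrightarrow> t u \<le> t v \<and> (t u = t v \<longrightarrow> m_indeg M v = 2)) \<and>
     (\<forall>u\<in>V. m_outdeg M u \<ge> 1 \<longrightarrow> (\<exists>v. (u, v) \<in># M \<and> t u < t v)) \<and>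
     (\<forall>r\<in>V. \<forall>u v. filter_mset (\<lambda>a. snd a = r) M = {#(u, r), (v, r)#} \<longrightarrow>
        ((t u = t r) \<noteq> (t v = t r)))"

definition admits_hgt_labelling :: "'v set \<Rightarrow> ('v \<times> 'v) multiset \<Rightarrow> bool" where
  "admits_hgt_labelling V M \<longleftrightarrow> hgt_graph V M \<and> (\<exists>t. hgt_consistent V M t)"

definition multigraph_network :: "'v set \<Rightarrow> 'v set \<Rightarrow> ('v \<times> 'v) multiset \<Rightarrow> bool" where
  "multigraph_network X V M \<longleftrightarrow> (\<forall>a. count M a \<le> 1) \<and> network X V (set_mset M)"

end

theory Submission
  imports Defs
begin
lemma mi: "m_indeg M v = count (image_mset snd M) v"
  unfolding m_indeg_def by (induction M) auto
lemma mo: "m_outdeg M v = count (image_mset fst M) v"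
  unfolding m_outdeg_def by (induction M) auto
lemma si: assumes "finite B" shows "s_indeg B v = m_indeg (mset_set B) v"
proof -
  have "m_indeg (mset_set B) v = card {a\<in>B. snd a = v}"
    unfolding m_indeg_def using assms by (simp add: filter_mset_mset_set)
  also have "{a\<in>B. snd a = v} = (\<lambda>u. (u,v)) ` {u. (u,v)\<in>B}" by force
  also have "card \<dots> = s_indeg B v" unfolding s_indeg_def by (rule card_image) (auto simp: inj_on_def)
  finally show ?thesis by simp
qed
lemma so: assumes "finite B" shows "s_outdeg B v = m_outdeg (mset_set B) v"
proof -
  have "m_outdeg (mset_set B) v = card {a\<in>B. fst a = v}"
    unfolding m_outdeg_def using assms by (simp add: filter_mset_mset_set)
  also have "{a\<in>B. fst a = v} = (\<lambda>u. (v,u)) ` {u. (v,u)\<in>B}" by force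
  also have "card \<dots> = s_outdeg B v" unfolding s_outdeg_def by (rule card_image) (auto simp: inj_on_def)
  finally show ?thesis by simp
qed
lemma mss: "\<forall>a. count M a \<le> 1 \<Longrightarrow> mset_set (set_mset M) = M"
  by (metis count_eq_zero_iff count_mset_set(1,3) finite_set_mset le_antisym not_one_le_zero multiset_eqI order_class.order_eq_iff linorder_not_le less_one)
lemma two_le_size: "(a,v) \<in># F \<Longrightarrow> (a,v') \<in># F \<Longrightarrow> v \<noteq> v' \<Longrightarrow> size F \<ge> 2"
proof -
  assume h: "(a,v) \<in># F" "(a,v') \<in># F" "v \<noteq> v'"
  then have "(a,v') \<in># F - {#(a,v)#}" by (simp add: in_diff_count)
  then have "size (F - {#(a,v)#}) \<ge> 1" by (metis insert_DiffM size_add_mset le_add1 plus_1_eq_Suc add.commute)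
  moreover have "size F = Suc (size (F - {#(a,v)#}))" using h(1) by (metis insert_DiffM size_add_mset)
  ultimately show ?thesis by simp
qed

lemma main:
  fixes X V :: "'v set" and A :: "('v \<times> 'v) set" and x y p c z w :: 'v
  assumes net: "network X V A"
    and "(z, w) \<in> A"
    and "(p, x) \<in> A"
    and "(x, c) \<in> A"
    and "(z, w) \<noteq> (p, x)" and "(z, w) \<noteq> (x, c)"
    and adm: "admits_hgt_labelling V (rspr_arcs A p x c z w)"
  shows "multigraph_network X V (rspr_arcs A p x c z w)"
proof -
  define M where "M = rspr_arcs A p x c z w"
  from adm obtain t where hg: "hgt_graph V M" and hc: "hgt_consistent V M t"
    unfolding admits_hgt_labelling_def M_def by blast
  have finA: "finite A" using net unfolding network_def by (meson finite_SigmaI rev_finite_subset)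
  have acA: "acyclic A" using net unfolding network_def by blast
  have px: "p \<noteq> x" using acA assms(3) by (auto simp: acyclic_def)
  have xc: "(p,x) \<noteq> (x,c)" using px by simp
  let ?R = "{#(p, x), (x, c), (z, w)#}" and ?S = "{#(p, c), (z, x), (x, w)#}"
  have Rsub: "?R \<subseteq># mset_set A"
  proof -
    have "?R = mset_set {(p, x), (x, c), (z, w)}" using xc assms(5,6) by auto
    then show ?thesis using assms(2-4) finA by (simp add: msubset_mset_set_iff)
  qed
  have MV: "set_mset M \<subseteq> V \<times> V" using hg unfolding hgt_graph_def by blast
  have cnt: "\<forall>a. count M a \<le> 1"
  proof (rule ccontr)
    assume "\<not> (\<forall>a. count M a \<le> 1)"
    then obtain u r where c2: "count M (u,r) \<ge> 2" using not_less_eq_eq by fastforce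
    define F where "F = filter_mset (\<lambda>a. snd a = r) M"
    have "(u,r) \<in># M" using c2 by (metis count_eq_zero_iff not_numeral_le_zero)
    then have rV: "r \<in> V" using MV by auto
    have sz: "size F \<le> 2" using hg rV unfolding hgt_graph_def m_indeg_def F_def by auto
    have sub: "{#(u,r),(u,r)#} \<subseteq># F"
      using c2 unfolding F_def by (simp add: subseteq_mset_def)
    have "F = {#(u,r),(u,r)#}"
    proof -
      have "size {#(u,r),(u,r)#} = 2" by simp
      then show ?thesis using sub sz by (metis linorder_not_le mset_subset_size subset_mset.less_le)
    qed
    then have "(t u = t r) \<noteq> (t u = t r)" using hc rV unfolding hgt_consistent_def F_def by blast
    then show False by simp
  qed
  have imsnd: "image_mset snd M = image_mset snd (mset_set A)"
  proof -
    have h1: "image_mset snd M = image_mset snd (mset_set A) - image_mset snd ?R + image_mset snd ?S"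
      unfolding M_def rspr_arcs_def using Rsub by (simp only: image_mset_Diff image_mset_union)
    have h2: "image_mset snd ?R = image_mset snd ?S" by simp
    have h3: "image_mset snd ?R \<subseteq># image_mset snd (mset_set A)" using Rsub by (rule image_mset_subseteq_mono)
    show ?thesis unfolding h1 h2[symmetric] by (rule subset_mset.diff_add[OF h3])
  qed
  have imfst: "image_mset fst M = image_mset fst (mset_set A)"
  proof -
    have h1: "image_mset fst M = image_mset fst (mset_set A) - image_mset fst ?R + image_mset fst ?S"
      unfolding M_def rspr_arcs_def using Rsub by (simp only: image_mset_Diff image_mset_union)
    have h2: "image_mset fst ?R = image_mset fst ?S" by simp
    have h3: "image_mset fst ?R \<subseteq># image_mset fst (mset_set A)" using Rsub by (rule image_mset_subseteq_mono)
    show ?thesis unfolding h1 h2[symmetric] by (rule subset_mset.diff_add[OF h3])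
  qed
  have mss': "mset_set (set_mset M) = M" using cnt by (rule mss)
  have indeq: "s_indeg (set_mset M) v = s_indeg A v" for v
    using si[of "set_mset M" v] si[OF finA, of v] mss' imsnd by (simp add: mi)
  have outeq: "s_outdeg (set_mset M) v = s_outdeg A v" for v
    using so[of "set_mset M" v] so[OF finA, of v] mss' imfst by (simp add: mo)
  have mono: "(u,v) \<in> (set_mset M)\<^sup>* \<Longrightarrow> t u \<le> t v" for u v
  proof (induction rule: rtrancl_induct)
    case base then show ?case by simp
  next
    case (step b d) then show ?case using hc unfolding hgt_consistent_def by force
  qed
  have acM: "acyclic (set_mset M)"
  proof (rule acyclicI, rule allI, rule notI)
    fix a assume "(a,a) \<in> (set_mset M)\<^sup>+"
    then obtain u where au: "(a,u) \<in> (set_mset M)\<^sup>*" and ua: "(u,a) \<in> set_mset M"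
      by (meson tranclD2)
    from \<open>(a,a) \<in> _\<close> obtain v where av: "(a,v) \<in> set_mset M" and va: "(v,a) \<in> (set_mset M)\<^sup>*"
      by (meson tranclD)
    have "t u \<le> t a" using ua hc unfolding hgt_consistent_def by auto
    moreover have "t a \<le> t u" using mono au by blast
    ultimately have "t u = t a" by simp
    then have ia: "m_indeg M a = 2" using ua hc unfolding hgt_consistent_def by auto
    have aV: "a \<in> V" using ua MV by auto
    have oa: "m_outdeg M a \<le> 1" using hg aV ia unfolding hgt_graph_def by auto
    have "t a \<le> t v" using av hc unfolding hgt_consistent_def by auto
    moreover have "t v \<le> t a" using mono va by blast
    ultimately have tav: "t a = t v" by simp
    have "m_outdeg M a \<ge> 1" using av unfolding m_outdeg_def
      by (metis (mono_tags, lifting) One_nat_def Suc_leI  filter_mset_eq_mempty_iff fst_eqD nonempty_has_size)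
    then obtain v' where av': "(a,v') \<in># M" and lt: "t a < t v'" using hc aV unfolding hgt_consistent_def by blast
    have "v \<noteq> v'" using tav lt by auto
    then have "m_outdeg M a \<ge> 2" unfolding m_outdeg_def
      using two_le_size[of a v "filter_mset (\<lambda>b. fst b = a) M" v'] av av' by simp
    then show False using oa by simp
  qed
  show ?thesis unfolding multigraph_network_def M_def[symmetric]
  proof (intro conjI)
    show "\<forall>a. count M a \<le> 1" by (rule cnt)
    show "network X V (set_mset M)"
      using net MV acM unfolding network_def is_root_node_def is_tree_node_def is_reticulation_def is_leaf_def
      by (simp add: indeq outeq)
  qed
qed

theorem mainTheorem8:
  fixes X V :: "'v set" and A :: "('v \<times> 'v) set" and x y p c z w :: 'v
  assumes "binary_network X V A"
    and "orchard X V A"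
    and "(z, w) \<in> A"
    and "(x, y) \<in> A \<or> (y, x) \<in> A"
    and "(p, x) \<in> A" and "p \<noteq> y"
    and "(x, c) \<in> A" and "c \<noteq> y"
    and "(z, w) \<noteq> (p, x)" and "(z, w) \<noteq> (x, c)"
    and "admits_hgt_labelling V (rspr_arcs A p x c z w)"
  shows "multigraph_network X V (rspr_arcs A p x c z w)"
  using main[of X V A z w p x c] assms unfolding binary_network_def by blast

end
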